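(* Let $e_1<e_2<e_3<e_4$ be distinct reals and $h>0$. Let $A(z)=\prod_{k=1}^4(z-e_k)$ and $R(z)=2hz^2-\eta_1z+\eta_2$, where $(\eta_1,\eta_2)$ is a value in the image of the reduced ellipsoidal momentum map $(\eta_1,\eta_2):M_h\to\mathbb R^2$, so that $R$ has real roots $r_1\le r_2$ with $e_1\le r_1\le r_2\le e_4$. Let $p(s)=\sqrt{-R(s)/(4A(s))}$ and define $$J_1=\frac2\pi\int_{e_1}^{\min(r_1,e_2)}p(s)\,ds,\quad J_2=\frac2\pi\int_{\max(r_1,e_2)}^{\min(r_2,e_3)}p(s)\,ds,\quad J_3=\frac2\pi\int_{\max(r_2,e_3)}^{e_4}p(s)\,ds.$$ Then $J_1+J_2+J_3=\sqrt{2h}$.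
   Context: $M_h=\{\mathbf L=(\ell_{ij})_{i<j}\in\mathbb R^6:\sum_{i<j}\ell_{ij}^2=2h,\ \ell_{12}\ell_{34}-\ell_{13}\ell_{24}+\ell_{14}\ell_{23}=0\}\cong S^2\times S^2$, and $\eta_1=\sum_{i<j}\ell_{ij}^2\sum_{k\ne i,j}e_k$, $\eta_2=\sum_{i<j}\ell_{ij}^2\prod_{k\ne i,j}e_k$. These $J_i$ are the (discrete-symmetry reduced, globally continuous) action variables of the geodesic flow on $S^3$ separated in ellipsoidal coordinates, where the separated momenta satisfy $p_i^2=-R(s_i)/(4A(s_i))$; on each integration interval the radicand is nonnegative. *)

theory Defs
  imports "HOL-Analysis.Analysis"
begin

text \<open>Index pairs (i,j) with 1 \<le> i < j \<le> 4; a point L of R^6 is represented by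
  its components L i j for (i,j) in this set (other values are irrelevant).\<close>
definition pairs4 :: "(nat \<times> nat) set" where
  "pairs4 = {(i, j). 1 \<le> i \<and> i < j \<and> j \<le> 4}"

definition M_h :: "real \<Rightarrow> (nat \<Rightarrow> nat \<Rightarrow> real) set" where
  "M_h h = {L. (\<Sum>(i, j)\<in>pairs4. (L i j)\<^sup>2) = 2 * h \<and>
              L 1 2 * L 3 4 - L 1 3 * L 2 4 + L 1 4 * L 2 3 = 0}"

definition eta1 :: "(nat \<Rightarrow> real) \<Rightarrow> (nat \<Rightarrow> nat \<Rightarrow> real) \<Rightarrow> real" where
  "eta1 e L = (\<Sum>(i, j)\<in>pairs4. (L i j)\<^sup>2 * (\<Sum>k\<in>{1..4} - {i, j}. e k))"

definition eta2 :: "(nat \<Rightarrow> real) \<Rightarrow> (nat \<Rightarrow> nat \<Rightarrow> real) \<Rightarrow> real" where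
  "eta2 e L = (\<Sum>(i, j)\<in>pairs4. (L i j)\<^sup>2 * (\<Prod>k\<in>{1..4} - {i, j}. e k))"

definition momentum_image :: "(nat \<Rightarrow> real) \<Rightarrow> real \<Rightarrow> (real \<times> real) set" where
  "momentum_image e h = (\<lambda>L. (eta1 e L, eta2 e L)) ` M_h h"

definition polyA :: "(nat \<Rightarrow> real) \<Rightarrow> real \<Rightarrow> real" where
  "polyA e z = (\<Prod>k\<in>{1..4}. z - e k)"

definition polyR :: "real \<Rightarrow> real \<Rightarrow> real \<Rightarrow> real \<Rightarrow> real" where
  "polyR h n1 n2 z = 2 * h * z\<^sup>2 - n1 * z + n2"

definition mom_p :: "(nat \<Rightarrow> real) \<Rightarrow> real \<Rightarrow> real \<Rightarrow> real \<Rightarrow> real \<Rightarrow> real" where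
  "mom_p e h n1 n2 s = sqrt (- polyR h n1 n2 s / (4 * polyA e s))"

end

theory Submission
  imports Defs "HOL-Complex_Analysis.Complex_Analysis"
begin

definition sq :: "complex \<Rightarrow> complex" where
  "sq w = (1 + \<i>) / of_real (sqrt 2) * csqrt (- \<i> * w)"

lemma sq_c2: "((1 + \<i>) / of_real (sqrt 2))^2 = \<i>"
  by (simp add: power2_eq_square field_simps complex_eq_iff)

lemma sq_square: "(sq w)^2 = w"
  unfolding sq_def power_mult_distrib sq_c2 power2_csqrt by simp

lemma norm_c: "norm ((1 + \<i>) / of_real (sqrt 2)) = 1"
  by (simp add: norm_divide cmod_def power_divide)

lemma norm_sq: "norm (sq w) = sqrt (norm w)"
  unfolding sq_def norm_mult norm_c by (simp add: norm_mult)

lemma sq_real_nonneg: assumes "t \<ge> 0" shows "sq (of_real t) = of_real (sqrt t)"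
proof -
  have eq: "csqrt (- \<i> * of_real t) = (1 - \<i>) / of_real (sqrt 2) * of_real (sqrt t)"
  proof (cases "t = 0")
    case False
    show ?thesis
    proof (rule csqrt_unique)
      show "((1 - \<i>) / of_real (sqrt 2) * of_real (sqrt t))\<^sup>2 = - \<i> * of_real t"
        using assms by (simp add: power2_eq_square field_simps complex_eq_iff)
      show "0 < Re ((1 - \<i>) / of_real (sqrt 2) * of_real (sqrt t)) \<or>
        Re ((1 - \<i>) / of_real (sqrt 2) * of_real (sqrt t)) = 0 \<and> 0 \<le> Im ((1 - \<i>) / of_real (sqrt 2) * of_real (sqrt t))"
        using assms False by simp
    qed
  qed simp
  show ?thesis unfolding sq_def eq using assms by (simp add: field_simps complex_eq_iff power2_eq_square)
qed

lemma sq_real_neg: assumes "t < 0" shows "sq (of_real t) = \<i> * of_real (sqrt (- t))"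
proof -
  have eq: "csqrt (- \<i> * of_real t) = (1 + \<i>) / of_real (sqrt 2) * of_real (sqrt (-t))"
  proof (rule csqrt_unique)
    show "((1 + \<i>) / of_real (sqrt 2) * of_real (sqrt (-t)))\<^sup>2 = - \<i> * of_real t"
      using assms by (simp add: power2_eq_square field_simps complex_eq_iff)
    show "0 < Re ((1 + \<i>) / of_real (sqrt 2) * of_real (sqrt (-t))) \<or>
      Re ((1 + \<i>) / of_real (sqrt 2) * of_real (sqrt (-t))) = 0 \<and> 0 \<le> Im ((1 + \<i>) / of_real (sqrt 2) * of_real (sqrt (-t)))"
      using assms by simp
  qed
  show ?thesis unfolding sq_def eq using assms by (simp add: field_simps complex_eq_iff power2_eq_square)
qed

lemma sq_holo: "sq holomorphic_on {w. Im w > 0}"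
  unfolding sq_def
  by (intro holomorphic_intros) (auto simp: complex_nonpos_Reals_iff)

lemma sq_cont_real: assumes "t \<noteq> 0" shows "isCont sq (of_real t)"
  unfolding sq_def
  by (intro continuous_intros continuous_at_compose[of _ "\<lambda>w. - \<i> * w" csqrt, unfolded o_def] continuous_at_csqrt)
     (use assms in \<open>auto simp: complex_nonpos_Reals_iff\<close>)

lemma csqrt_Re_dom: assumes "Re P > 0" shows "Re (csqrt P) > \<bar>Im (csqrt P)\<bar>"
proof -
  define w where "w = csqrt P"
  have "w^2 = P" unfolding w_def by simp
  then have "Re P = (Re w)^2 - (Im w)^2" by (auto simp: power2_eq_square)
  with assms have "(Im w)^2 < (Re w)^2" by simp
  moreover have "Re w \<ge> 0" unfolding w_def by (rule Re_csqrt)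
  ultimately show ?thesis unfolding w_def[symmetric]
    by (metis abs_of_nonneg abs_le_square_iff not_le real_sqrt_abs real_sqrt_le_iff power2_abs)
qed

lemma Re_sq_cnj_pos: assumes "Im p > 0" "Im q > 0" shows "Re (sq p * cnj (sq q)) > 0"
proof -
  define u where "u = csqrt (- \<i> * p)"
  define v where "v = csqrt (- \<i> * q)"
  have cc: "((1 + \<i>) / of_real (sqrt 2)) * cnj ((1 + \<i>) / of_real (sqrt 2)) = 1"
    by (simp add: complex_eq_iff field_simps power2_eq_square)
  have "sq p * cnj (sq q) = (((1 + \<i>) / of_real (sqrt 2)) * cnj ((1 + \<i>) / of_real (sqrt 2))) * (u * cnj v)"
    unfolding sq_def u_def v_def by (simp only: complex_cnj_mult mult_ac)
  also have "\<dots> = u * cnj v" by (simp only: cc mult_1_left)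
  finally have eq: "sq p * cnj (sq q) = u * cnj v" .
  have hu: "Re u > \<bar>Im u\<bar>" unfolding u_def by (rule csqrt_Re_dom) (use assms in simp)
  have hv: "Re v > \<bar>Im v\<bar>" unfolding v_def by (rule csqrt_Re_dom) (use assms in simp)
  have "Re (u * cnj v) = Re u * Re v + Im u * Im v" by simp
  moreover have "\<bar>Im u * Im v\<bar> < Re u * Re v"
    using hu hv by (simp add: abs_mult mult_strict_mono')
  ultimately show ?thesis unfolding eq by linarith
qed

lemma sq_nz: "w \<noteq> 0 \<Longrightarrow> sq w \<noteq> 0"
  using norm_sq[of w] by (metis norm_zero real_sqrt_eq_zero_cancel_iff zero_less_norm_iff less_irrefl)

lemma ratio_close:
  assumes "Im p > 0" "Im q > 0"
  shows "norm (sq p / sq q - 1) \<le> norm (p / q - 1)"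
proof -
  define t where "t = sq p / sq q"
  have q0: "sq q \<noteq> 0" using assms by (intro sq_nz) auto
  have cq: "cnj (sq q) \<noteq> 0" using q0 by simp
  have "t = sq p * cnj (sq q) / (sq q * cnj (sq q))"
    unfolding t_def by (rule nonzero_mult_divide_mult_cancel_right[OF cq, symmetric])
  also have "\<dots> = sq p * cnj (sq q) / of_real ((norm (sq q))^2)"
    by (simp only: complex_norm_square[symmetric])
  finally have "t = sq p * cnj (sq q) / of_real ((norm (sq q))^2)" .
  hence "Re t = Re (sq p * cnj (sq q)) / (norm (sq q))^2"
    by (simp only: Re_divide_of_real)
  moreover have "(norm (sq q))^2 > 0" using q0 by simp
  ultimately have ret: "Re t > 0" using Re_sq_cnj_pos[OF assms] by simp
  have t2: "t^2 = p / q"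
    unfolding t_def by (simp only: power_divide sq_square)
  have "1 \<le> Re (t + 1)" using ret by simp
  also have "\<dots> \<le> norm (t + 1)" by (rule complex_Re_le_cmod)
  finally have n1: "1 \<le> norm (t + 1)" .
  have "t^2 - 1 = (t - 1) * (t + 1)" by (simp add: power2_eq_square algebra_simps)
  hence nn: "norm (t^2 - 1) = norm (t - 1) * norm (t + 1)" by (simp only: norm_mult)
  have "norm (t - 1) * 1 \<le> norm (t - 1) * norm (t + 1)"
    by (rule mult_left_mono[OF n1 norm_ge_zero])
  hence "norm (t - 1) \<le> norm (t^2 - 1)" using nn by simp
  then show ?thesis using t2 t_def by simp
qed

lemma prod_close_2:
  fixes x y :: complex
  shows "norm (x * y - 1) \<le> norm (x - 1) * norm y + norm (y - 1)"
proof -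
  have "x * y - 1 = (x - 1) * y + (y - 1)" by (simp add: algebra_simps)
  then show ?thesis by (metis norm_mult norm_triangle_ineq)
qed

lemma prod_close_4:
  fixes w1 w2 w3 w4 :: complex
  assumes "norm (w1 - 1) \<le> d" "norm (w2 - 1) \<le> d" "norm (w3 - 1) \<le> d" "norm (w4 - 1) \<le> d" "d \<le> 1"
  shows "norm (w1 * w2 * w3 * w4 - 1) \<le> 15 * d"
proof -
  have d0: "0 \<le> d" using assms(1) norm_ge_zero order_trans by blast
  have dd: "d * d \<le> d" using assms(5) d0 by (simp add: mult_left_le)
  have nb: "norm w \<le> 1 + d" if "norm (w - 1) \<le> d" for w :: complex
    using that norm_triangle_ineq2[of w 1] by simp
  have a: "norm (w1 * w2 - 1) \<le> 3 * d"
  proof -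
    have "norm (w1 * w2 - 1) \<le> norm (w1 - 1) * norm w2 + norm (w2 - 1)" by (rule prod_close_2)
    also have "\<dots> \<le> d * (1 + d) + d"
      by (intro add_mono mult_mono assms nb) (use d0 in auto)
    also have "\<dots> \<le> 3 * d" using dd by (simp add: ring_distribs; linarith)
    finally show ?thesis .
  qed
  have b: "norm (w1 * w2 * w3 - 1) \<le> 7 * d"
  proof -
    have "norm (w1 * w2 * w3 - 1) \<le> norm (w1 * w2 - 1) * norm w3 + norm (w3 - 1)" by (rule prod_close_2)
    also have "\<dots> \<le> (3 * d) * (1 + d) + d"
      by (intro add_mono mult_mono a assms nb) (use d0 in auto)
    also have "\<dots> \<le> 7 * d" using dd by (simp add: ring_distribs; linarith)
    finally show ?thesis .
  qed
  have "norm (w1 * w2 * w3 * w4 - 1) \<le> norm (w1 * w2 * w3 - 1) * norm w4 + norm (w4 - 1)" by (rule prod_close_2)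
  also have "\<dots> \<le> (7 * d) * (1 + d) + d"
    by (intro add_mono mult_mono b assms nb) (use d0 in auto)
  also have "\<dots> \<le> 15 * d" using dd by (simp add: ring_distribs; linarith)
  finally show ?thesis .
qed

definition Gf :: "real \<Rightarrow> real \<Rightarrow> real \<Rightarrow> real \<Rightarrow> real \<Rightarrow> real \<Rightarrow> complex \<Rightarrow> complex" where
  "Gf r1 r2 a1 a2 a3 a4 z = sq (z - of_real r1) * sq (z - of_real r2) /
     (sq (z - of_real a1) * sq (z - of_real a2) * sq (z - of_real a3) * sq (z - of_real a4))"

lemma alg6:
  fixes s A B c1 c2 c3 c4 :: complex
  assumes "c1 \<noteq> 0" "c2 \<noteq> 0" "c3 \<noteq> 0" "c4 \<noteq> 0"
  shows "(s * s) * (A * B / (c1 * c2 * c3 * c4)) = (s / c1) * (s / c2) * (A / c3) * (B / c4)"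
  using assms by (simp add: field_simps)

lemma ratio_bound:
  fixes a b :: real and z :: complex
  assumes "Im z > 0" "\<bar>a\<bar> + \<bar>b\<bar> \<le> D" "2 * D \<le> norm z" "D > 0"
  shows "norm (sq (z - of_real a) / sq (z - of_real b) - 1) \<le> 2 * D / norm z"
proof -
  have "norm (sq (z - of_real a) / sq (z - of_real b) - 1) \<le> norm ((z - of_real a) / (z - of_real b) - 1)"
    by (rule ratio_close) (use assms in auto)
  also have "(z - of_real a) / (z - of_real b) - 1 = of_real (b - a) / (z - of_real b)"
  proof -
    have "z - of_real b \<noteq> 0" using assms(1) by (auto simp: complex_eq_iff)
    then show ?thesis by (simp add: field_simps)
  qed
  also have "norm (of_real (b - a) / (z - of_real b)) = \<bar>b - a\<bar> / norm (z - of_real b)"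
    by (simp add: norm_divide flip: of_real_diff)
  also have "\<dots> \<le> D / (norm z / 2)"
  proof (rule frac_le)
    show "\<bar>b - a\<bar> \<le> D" using assms(2) by linarith
    show "0 < norm z / 2" using assms by linarith
    have "norm z - norm (of_real b :: complex) \<le> norm (z - of_real b)" by (rule norm_triangle_ineq2)
    then show "norm z / 2 \<le> norm (z - of_real b)" using assms(2,3) by simp
  qed (use assms in auto)
  also have "\<dots> = 2 * D / norm z" by simp
  finally show ?thesis .
qed

lemma G_asym:
  fixes z :: complex
  assumes "Im z > 0"
    and D: "D = \<bar>r1\<bar> + \<bar>r2\<bar> + \<bar>a1\<bar> + \<bar>a2\<bar> + \<bar>a3\<bar> + \<bar>a4\<bar> + 1"
    and "2 * D \<le> norm z"
  shows "norm (Gf r1 r2 a1 a2 a3 a4 z - 1 / (z + \<i>)) \<le> (30 * D + 1) / (norm z)^2"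
proof -
  have D0: "D > 0" using D by linarith
  have z0: "z \<noteq> 0" using assms(1) by auto
  have nz: "norm z > 0" using z0 by simp
  have nzb: "z - of_real c \<noteq> 0" for c using assms(1) by (auto simp: complex_eq_iff)
  have sqnz: "sq (z - of_real c) \<noteq> 0" for c using nzb sq_nz by blast
  have sqz: "sq z * sq z = z" using sq_square[of z] by (simp add: power2_eq_square)
  have "z * Gf r1 r2 a1 a2 a3 a4 z =
    (sq (z - of_real 0) / sq (z - of_real a1)) * (sq (z - of_real 0) / sq (z - of_real a2)) *
    (sq (z - of_real r1) / sq (z - of_real a3)) * (sq (z - of_real r2) / sq (z - of_real a4))"
  proof -
    have "z * Gf r1 r2 a1 a2 a3 a4 z = (sq z * sq z) * Gf r1 r2 a1 a2 a3 a4 z" by (simp only: sqz)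
    also have "\<dots> = (sq (z - of_real 0) / sq (z - of_real a1)) * (sq (z - of_real 0) / sq (z - of_real a2)) *
    (sq (z - of_real r1) / sq (z - of_real a3)) * (sq (z - of_real r2) / sq (z - of_real a4))"
      unfolding Gf_def of_real_0 diff_zero by (rule alg6) (use sqnz in auto)
    finally show ?thesis .
  qed
  moreover
  have "norm ((sq (z - of_real 0) / sq (z - of_real a1)) * (sq (z - of_real 0) / sq (z - of_real a2)) *
    (sq (z - of_real r1) / sq (z - of_real a3)) * (sq (z - of_real r2) / sq (z - of_real a4)) - 1)
    \<le> 15 * (2 * D / norm z)"
  proof (rule prod_close_4)
    show "norm (sq (z - of_real 0) / sq (z - of_real a1) - 1) \<le> 2 * D / norm z"
      by (rule ratio_bound[OF assms(1) _ assms(3) D0]) (unfold D, simp)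
    show "norm (sq (z - of_real 0) / sq (z - of_real a2) - 1) \<le> 2 * D / norm z"
      by (rule ratio_bound[OF assms(1) _ assms(3) D0]) (unfold D, simp)
    show "norm (sq (z - of_real r1) / sq (z - of_real a3) - 1) \<le> 2 * D / norm z"
      by (rule ratio_bound[OF assms(1) _ assms(3) D0]) (unfold D, simp)
    show "norm (sq (z - of_real r2) / sq (z - of_real a4) - 1) \<le> 2 * D / norm z"
      by (rule ratio_bound[OF assms(1) _ assms(3) D0]) (unfold D, simp)
    show "2 * D / norm z \<le> 1" using assms(3) nz by (simp add: divide_le_eq)
  qed
  ultimately have zg: "norm (z * Gf r1 r2 a1 a2 a3 a4 z - 1) \<le> 30 * D / norm z" by simp
  have "Gf r1 r2 a1 a2 a3 a4 z - 1 / z = (z * Gf r1 r2 a1 a2 a3 a4 z - 1) / z"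
    using z0 by (simp add: field_simps)
  hence "norm (Gf r1 r2 a1 a2 a3 a4 z - 1 / z) = norm (z * Gf r1 r2 a1 a2 a3 a4 z - 1) / norm z"
    by (simp add: norm_divide)
  also have "\<dots> \<le> (30 * D / norm z) / norm z" by (rule divide_right_mono[OF zg]) simp
  also have "\<dots> = 30 * D / (norm z)^2" by (simp add: power2_eq_square)
  finally have g1: "norm (Gf r1 r2 a1 a2 a3 a4 z - 1 / z) \<le> 30 * D / (norm z)^2" .
  have zi: "z + \<i> \<noteq> 0" using assms(1) by (auto simp: complex_eq_iff)
  have "norm z ^2 \<le> norm (z + \<i>) ^2" using assms(1)
    unfolding cmod_power2 using assms(1) by (simp add: power2_eq_square algebra_simps)
  hence nzi: "norm z \<le> norm (z + \<i>)" by (simp add: power_mono_iff)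
  have "1 / z - 1 / (z + \<i>) = \<i> / (z * (z + \<i>))" using z0 zi by (simp add: field_simps)
  hence "norm (1 / z - 1 / (z + \<i>)) = 1 / (norm z * norm (z + \<i>))"
    by (simp add: norm_divide norm_mult)
  also have "\<dots> \<le> 1 / (norm z)^2"
    unfolding power2_eq_square
    by (rule divide_left_mono) (use nz nzi zi in \<open>auto intro: mult_left_mono\<close>)
  finally have g2: "norm (1 / z - 1 / (z + \<i>)) \<le> 1 / (norm z)^2" .
  have "norm (Gf r1 r2 a1 a2 a3 a4 z - 1 / (z + \<i>)) \<le> norm (Gf r1 r2 a1 a2 a3 a4 z - 1 / z) + norm (1 / z - 1 / (z + \<i>))"
    using norm_triangle_ineq[of "Gf r1 r2 a1 a2 a3 a4 z - 1 / z" "1 / z - 1 / (z + \<i>)"] by simp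

  also have "\<dots> \<le> 30 * D / (norm z)^2 + 1 / (norm z)^2" using g1 g2 by linarith
  also have "\<dots> = (30 * D + 1) / (norm z)^2" by (simp add: add_divide_distrib)
  finally show ?thesis .
qed

lemma seg_in:
  assumes "convex S" "a \<in> S" "b \<in> S" "x \<in> closed_segment a b"
  shows "x \<in> S"
  using closed_segment_subset[OF assms(2,3,1)] assms(4) by blast

lemma rect_bound:
  fixes H :: "complex \<Rightarrow> complex"
  assumes holo: "H holomorphic_on {w. Im w > - \<epsilon>}" and "\<epsilon> > 0" "\<rho> > 0" "B \<ge> 0"
    and bnd: "\<And>w. Im w \<ge> 0 \<Longrightarrow> norm w \<ge> \<rho> \<Longrightarrow> norm (H w) \<le> B / \<rho>^2"
  shows "norm (integral {-\<rho>..\<rho>} (\<lambda>x. H (of_real x))) \<le> 4 * B / \<rho>"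
proof -
  define S where "S = {w. Im w > - \<epsilon>}"
  have oS: "open S" unfolding S_def by (simp add: open_halfspace_Im_gt)
  have cS: "convex S" unfolding S_def by (rule convex_halfspace_Im_gt)
  define p1 where "p1 = (- of_real \<rho> :: complex)"
  define p2 where "p2 = (of_real \<rho> :: complex)"
  define p3 where "p3 = (of_real \<rho> + \<i> * of_real \<rho> :: complex)"
  define p4 where "p4 = (- of_real \<rho> + \<i> * of_real \<rho> :: complex)"
  have inS: "p1 \<in> S" "p2 \<in> S" "p3 \<in> S" "p4 \<in> S"
    unfolding S_def p1_def p2_def p3_def p4_def using assms by auto
  have segS: "closed_segment a b \<subseteq> S" if "a \<in> S" "b \<in> S" for a b
    using closed_segment_subset[OF that cS] .
  have ci: "H contour_integrable_on linepath a b" if "a \<in> S" "b \<in> S" for a b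
    by (rule contour_integrable_holomorphic_simple[OF holo[folded S_def] oS]) (use segS[OF that] in auto)
  define I1 where "I1 = contour_integral (linepath p1 p2) H"
  define I2 where "I2 = contour_integral (linepath p2 p3) H"
  define I3 where "I3 = contour_integral (linepath p3 p4) H"
  define I4 where "I4 = contour_integral (linepath p4 p1) H"
  have h1: "(H has_contour_integral I1) (linepath p1 p2)" unfolding I1_def using ci inS by (simp add: has_contour_integral_integral)
  have h2: "(H has_contour_integral I2) (linepath p2 p3)" unfolding I2_def using ci inS by (simp add: has_contour_integral_integral)
  have h3: "(H has_contour_integral I3) (linepath p3 p4)" unfolding I3_def using ci inS by (simp add: has_contour_integral_integral)
  have h4: "(H has_contour_integral I4) (linepath p4 p1)" unfolding I4_def using ci inS by (simp add: has_contour_integral_integral)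
  define g where "g = linepath p1 p2 +++ linepath p2 p3 +++ linepath p3 p4 +++ linepath p4 p1"
  have "(H has_contour_integral (I1 + (I2 + (I3 + I4)))) g"
    unfolding g_def
    by (intro has_contour_integral_join h1 h2 h3 h4 valid_path_join valid_path_linepath) auto
  moreover have "(H has_contour_integral 0) g"
  proof (rule Cauchy_theorem_convex_simple[OF holo[folded S_def] cS])
    show "valid_path g" unfolding g_def by (intro valid_path_join valid_path_linepath) auto
    show "path_image g \<subseteq> S" unfolding g_def
      using segS inS by (simp add: path_image_join)
    show "pathfinish g = pathstart g" unfolding g_def by simp
  qed
  ultimately have sum0: "I1 + (I2 + (I3 + I4)) = 0" using has_contour_integral_unique by blast
  have b2: "norm I2 \<le> B / \<rho>^2 * norm (p3 - p2)"
  proof (rule has_contour_integral_bound_linepath[OF h2])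
    show "0 \<le> B / \<rho>^2" using assms by simp
    fix x assume x: "x \<in> closed_segment p2 p3"
    have "x \<in> {w. Re w \<ge> \<rho>} \<inter> {w. Im w \<ge> 0}"
      by (rule seg_in[OF _ _ _ x]) (use assms in \<open>auto simp: p2_def p3_def intro: convex_Int convex_halfspace_Re_ge convex_halfspace_Im_ge\<close>)
    then have "Im x \<ge> 0" "norm x \<ge> \<rho>" using complex_Re_le_cmod[of x] by auto
    then show "norm (H x) \<le> B / \<rho>^2" by (rule bnd)
  qed
  have b3: "norm I3 \<le> B / \<rho>^2 * norm (p4 - p3)"
  proof (rule has_contour_integral_bound_linepath[OF h3])
    show "0 \<le> B / \<rho>^2" using assms by simp
    fix x assume x: "x \<in> closed_segment p3 p4"
    have "x \<in> {w. Im w \<ge> \<rho>}"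
      by (rule seg_in[OF _ _ _ x]) (use assms in \<open>auto simp: p3_def p4_def intro: convex_halfspace_Im_ge\<close>)
    then have "Im x \<ge> 0" "norm x \<ge> \<rho>" using abs_Im_le_cmod[of x] assms by auto
    then show "norm (H x) \<le> B / \<rho>^2" by (rule bnd)
  qed
  have b4: "norm I4 \<le> B / \<rho>^2 * norm (p1 - p4)"
  proof (rule has_contour_integral_bound_linepath[OF h4])
    show "0 \<le> B / \<rho>^2" using assms by simp
    fix x assume x: "x \<in> closed_segment p4 p1"
    have "x \<in> {w. Re w \<le> - \<rho>} \<inter> {w. Im w \<ge> 0}"
      by (rule seg_in[OF _ _ _ x]) (use assms in \<open>auto simp: p1_def p4_def intro: convex_Int convex_halfspace_Re_le convex_halfspace_Im_ge\<close>)
    then have "Im x \<ge> 0" "norm x \<ge> \<rho>" using abs_Re_le_cmod[of x] by auto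
    then show "norm (H x) \<le> B / \<rho>^2" by (rule bnd)
  qed
  have n2: "norm (p3 - p2) = \<rho>" "norm (p4 - p3) = 2 * \<rho>" "norm (p1 - p4) = \<rho>"
    using assms by (auto simp: p2_def p3_def p4_def p1_def norm_mult)
  have "I1 = - (I2 + I3 + I4)" using sum0 by (simp add: algebra_simps eq_neg_iff_add_eq_0)
  hence "norm I1 \<le> norm I2 + norm I3 + norm I4"
    by (metis norm_minus_cancel norm_triangle_ineq order_trans add_mono order_refl)
  also have "\<dots> \<le> B / \<rho>^2 * \<rho> + B / \<rho>^2 * (2 * \<rho>) + B / \<rho>^2 * \<rho>"
    using b2 b3 b4 n2 by simp
  also have "\<dots> = 4 * B / \<rho>" using assms by (simp add: power2_eq_square field_simps)
  finally have "norm I1 \<le> 4 * B / \<rho>" .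
  moreover have "I1 = integral {-\<rho>..\<rho>} (\<lambda>x. H (of_real x))"
    unfolding I1_def p1_def p2_def using assms
    by (subst contour_integral_linepath_Reals_eq) auto
  ultimately show ?thesis by simp
qed

definition ph :: "real \<Rightarrow> complex" where "ph t = (if t \<ge> 0 then 1 else \<i>)"

lemma sq_of_real_ph: "sq (of_real t) = ph t * of_real (sqrt \<bar>t\<bar>)"
  unfolding ph_def by (cases "t \<ge> 0") (auto simp: sq_real_nonneg sq_real_neg)

definition Wf :: "real \<Rightarrow> real \<Rightarrow> real \<Rightarrow> real \<Rightarrow> real \<Rightarrow> real \<Rightarrow> real \<Rightarrow> real" where
  "Wf r1 r2 a1 a2 a3 a4 x = sqrt \<bar>x - r1\<bar> * sqrt \<bar>x - r2\<bar> /
     (sqrt \<bar>x - a1\<bar> * sqrt \<bar>x - a2\<bar> * sqrt \<bar>x - a3\<bar> * sqrt \<bar>x - a4\<bar>)"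

lemma alg_ph:
  fixes p1 p2 q1 q2 q3 q4 :: complex and s1 s2 t1 t2 t3 t4 :: real
  shows "(p1 * of_real s1) * (p2 * of_real s2) / ((q1 * of_real t1) * (q2 * of_real t2) * (q3 * of_real t3) * (q4 * of_real t4))
    = (p1 * p2 / (q1 * q2 * q3 * q4)) * of_real (s1 * s2 / (t1 * t2 * t3 * t4))"
  by (simp add: field_simps)

lemma G_real_phase:
  "Gf r1 r2 a1 a2 a3 a4 (of_real x) = (ph (x - r1) * ph (x - r2) / (ph (x - a1) * ph (x - a2) * ph (x - a3) * ph (x - a4)))
      * of_real (Wf r1 r2 a1 a2 a3 a4 x)"
  unfolding Gf_def Wf_def by (simp only: of_real_diff[symmetric] sq_of_real_ph alg_ph)

lemma Im_c_real: "Im (c * of_real w) = Im c * w" by simp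

lemma Im_G_real:
  assumes "a1 < a2" "a2 < a3" "a3 < a4" "a1 \<le> r1" "r1 \<le> r2" "r2 \<le> a4" "r1 \<le> a3" "a2 \<le> r2"
    and "x \<notin> {r1, r2, a1, a2, a3, a4}"
  shows "Im (Gf r1 r2 a1 a2 a3 a4 (of_real x)) =
    (if x \<in> {a1..min r1 a2} \<or> x \<in> {max r1 a2..min r2 a3} \<or> x \<in> {max r2 a3..a4}
     then - Wf r1 r2 a1 a2 a3 a4 x else 0)"
proof -
  have "Im (Gf r1 r2 a1 a2 a3 a4 (of_real x)) = Im (ph (x - r1) * ph (x - r2) / (ph (x - a1) * ph (x - a2) * ph (x - a3) * ph (x - a4)))
      * Wf r1 r2 a1 a2 a3 a4 x" unfolding G_real_phase Im_c_real ..
  also have "Im (ph (x - r1) * ph (x - r2) / (ph (x - a1) * ph (x - a2) * ph (x - a3) * ph (x - a4))) =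
    (if x \<in> {a1..min r1 a2} \<or> x \<in> {max r1 a2..min r2 a3} \<or> x \<in> {max r2 a3..a4} then -1 else 0)"
    using assms unfolding ph_def by auto
  finally show ?thesis by simp
qed

lemma inv_sqrt_integrable:
  fixes a c d :: real
  assumes "c \<le> a" "a \<le> d"
  shows "(\<lambda>x. 1 / sqrt \<bar>x - a\<bar>) integrable_on {c..d}"
proof -
  have r: "((\<lambda>x. 1 / sqrt \<bar>x - a\<bar>) has_integral (2 * sqrt (d - a) - 2 * sqrt (a - a))) {a..d}"
  proof (rule fundamental_theorem_of_calculus_interior[OF assms(2)])
    show "continuous_on {a..d} (\<lambda>x. 2 * sqrt (x - a))" by (intro continuous_intros)
    fix x assume x: "x \<in> {a<..<d}"
    have "((\<lambda>x. 2 * sqrt (x - a)) has_real_derivative 1 / sqrt \<bar>x - a\<bar>) (at x)"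
      using x by (auto intro!: derivative_eq_intros simp: field_simps)
    then show "((\<lambda>x. 2 * sqrt (x - a)) has_vector_derivative 1 / sqrt \<bar>x - a\<bar>) (at x)"
      by (simp add: has_real_derivative_iff_has_vector_derivative)
  qed
  have l: "((\<lambda>x. 1 / sqrt \<bar>x - a\<bar>) has_integral (- 2 * sqrt (a - a) - (- 2 * sqrt (a - c)))) {c..a}"
  proof (rule fundamental_theorem_of_calculus_interior[OF assms(1)])
    show "continuous_on {c..a} (\<lambda>x. - 2 * sqrt (a - x))" by (intro continuous_intros)
    fix x assume x: "x \<in> {c<..<a}"
    have "((\<lambda>x. - 2 * sqrt (a - x)) has_real_derivative 1 / sqrt \<bar>x - a\<bar>) (at x)"
      using x by (auto intro!: derivative_eq_intros simp: field_simps)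
    then show "((\<lambda>x. - 2 * sqrt (a - x)) has_vector_derivative 1 / sqrt \<bar>x - a\<bar>) (at x)"
      by (simp add: has_real_derivative_iff_has_vector_derivative)
  qed
  show ?thesis
    by (rule Henstock_Kurzweil_Integration.integrable_combine[OF assms]) (use l r in \<open>auto simp: integrable_on_def\<close>)
qed

lemma inv4_le_sum:
  fixes x a1 a2 a3 a4 :: real
  assumes "a1 < a2" "a2 < a3" "a3 < a4" "x \<notin> {a1, a2, a3, a4}"
    and dl: "0 < \<delta>" "\<delta> \<le> a2 - a1" "\<delta> \<le> a3 - a2" "\<delta> \<le> a4 - a3"
  shows "1 / (sqrt \<bar>x - a1\<bar> * sqrt \<bar>x - a2\<bar> * sqrt \<bar>x - a3\<bar> * sqrt \<bar>x - a4\<bar>)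
     \<le> (1 / sqrt (\<delta>/2))^3 * (1 / sqrt \<bar>x - a1\<bar> + 1 / sqrt \<bar>x - a2\<bar> + 1 / sqrt \<bar>x - a3\<bar> + 1 / sqrt \<bar>x - a4\<bar>)"
proof -
  define m where "m = 1 / sqrt (\<delta>/2)"
  define u1 where "u1 = 1 / sqrt \<bar>x - a1\<bar>"
  define u2 where "u2 = 1 / sqrt \<bar>x - a2\<bar>"
  define u3 where "u3 = 1 / sqrt \<bar>x - a3\<bar>"
  define u4 where "u4 = 1 / sqrt \<bar>x - a4\<bar>"
  have pos: "u1 > 0" "u2 > 0" "u3 > 0" "u4 > 0" using assms(4) by (auto simp: u1_def u2_def u3_def u4_def)
  have m0: "m > 0" using dl by (simp add: m_def)
  have ub: "1 / sqrt \<bar>x - a\<bar> \<le> m" if "\<delta>/2 \<le> \<bar>x - a\<bar>" for a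
  proof -
    have "\<bar>x - a\<bar> > 0" using that dl by linarith
    then show ?thesis unfolding m_def using that dl by (intro divide_left_mono) auto
  qed
  have ub1: "1 / sqrt \<bar>x - a\<bar> \<le> m" if "\<delta>/2 \<le> x - a" for a
    using that by (intro ub) linarith
  have ub2: "1 / sqrt \<bar>x - a\<bar> \<le> m" if "\<delta>/2 \<le> a - x" for a
    using that by (intro ub) linarith
  have lhs: "1 / (sqrt \<bar>x - a1\<bar> * sqrt \<bar>x - a2\<bar> * sqrt \<bar>x - a3\<bar> * sqrt \<bar>x - a4\<bar>) = u1 * u2 * u3 * u4"
    by (simp add: u1_def u2_def u3_def u4_def)
  have "u1 * u2 * u3 * u4 \<le> m^3 * (u1 + u2 + u3 + u4)"
  proof (cases "x \<le> (a1 + a2) / 2")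
    case True
    have "u2 \<le> m" unfolding u2_def by (rule ub2) (use True assms(1-3) dl in \<open>simp add: field_simps\<close>)
    moreover have "u3 \<le> m" unfolding u3_def by (rule ub2) (use True assms(1-3) dl in \<open>simp add: field_simps\<close>)
    moreover have "u4 \<le> m" unfolding u4_def by (rule ub2) (use True assms(1-3) dl in \<open>simp add: field_simps\<close>)
    ultimately have "u1 * u2 * u3 * u4 \<le> u1 * m * m * m" using pos by (intro mult_mono) auto
    also have "\<dots> \<le> m^3 * (u1 + u2 + u3 + u4)" using pos m0 by (simp add: power3_eq_cube algebra_simps)
    finally show ?thesis .
  next
    case F1: False
    show ?thesis
    proof (cases "x \<le> (a2 + a3) / 2")
      case True
      have "u1 \<le> m" unfolding u1_def by (rule ub1) (use True F1 assms(1-3) dl in \<open>simp add: field_simps\<close>)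
      moreover have "u3 \<le> m" unfolding u3_def by (rule ub2) (use True F1 assms(1-3) dl in \<open>simp add: field_simps\<close>)
      moreover have "u4 \<le> m" unfolding u4_def by (rule ub2) (use True F1 assms(1-3) dl in \<open>simp add: field_simps\<close>)
      ultimately have "u1 * u2 * u3 * u4 \<le> m * u2 * m * m" using pos by (intro mult_mono) auto
      also have "\<dots> \<le> m^3 * (u1 + u2 + u3 + u4)" using pos m0 by (simp add: power3_eq_cube algebra_simps)
      finally show ?thesis .
    next
      case F2: False
      show ?thesis
      proof (cases "x \<le> (a3 + a4) / 2")
        case True
        have "u1 \<le> m" unfolding u1_def by (rule ub1) (use True F1 F2 assms(1-3) dl in \<open>simp add: field_simps\<close>)
        moreover have "u2 \<le> m" unfolding u2_def by (rule ub1) (use True F1 F2 assms(1-3) dl in \<open>simp add: field_simps\<close>)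
        moreover have "u4 \<le> m" unfolding u4_def by (rule ub2) (use True F1 F2 assms(1-3) dl in \<open>simp add: field_simps\<close>)
        ultimately have "u1 * u2 * u3 * u4 \<le> m * m * u3 * m" using pos by (intro mult_mono) auto
        also have "\<dots> \<le> m^3 * (u1 + u2 + u3 + u4)" using pos m0 by (simp add: power3_eq_cube algebra_simps)
        finally show ?thesis .
      next
        case F3: False
        have "u1 \<le> m" unfolding u1_def by (rule ub1) (use F1 F2 F3 assms(1-3) dl in \<open>simp add: field_simps\<close>)
        moreover have "u2 \<le> m" unfolding u2_def by (rule ub1) (use F1 F2 F3 assms(1-3) dl in \<open>simp add: field_simps\<close>)
        moreover have "u3 \<le> m" unfolding u3_def by (rule ub1) (use F1 F2 F3 assms(1-3) dl in \<open>simp add: field_simps\<close>)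
        ultimately have "u1 * u2 * u3 * u4 \<le> m * m * m * u4" using pos by (intro mult_mono) auto
        also have "\<dots> \<le> m^3 * (u1 + u2 + u3 + u4)" using pos m0 by (simp add: power3_eq_cube algebra_simps)
        finally show ?thesis .
      qed
    qed
  qed
  then show ?thesis unfolding lhs m_def[symmetric] u1_def[symmetric] u2_def[symmetric] u3_def[symmetric] u4_def[symmetric] .
qed

lemma Gf_holo: "Gf r1 r2 a1 a2 a3 a4 holomorphic_on {z. Im z > 0}"
proof -
  have h: "(\<lambda>z. sq (z - of_real c)) holomorphic_on {z. Im z > 0}" for c
  proof -
    have "(sq \<circ> (\<lambda>z. z - of_real c)) holomorphic_on {z. Im z > 0}"
      by (rule holomorphic_on_compose_gen[OF _ sq_holo]) (auto intro!: holomorphic_intros)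
    then show ?thesis by (simp add: o_def)
  qed
  have nz: "sq (z - of_real c) \<noteq> 0" if "Im z > 0" for z c
    by (rule sq_nz) (use that in \<open>auto simp: complex_eq_iff\<close>)
  show ?thesis unfolding Gf_def[abs_def]
    by (intro holomorphic_intros h) (use nz in auto)
qed

lemma H_holo:
  assumes "\<epsilon> > 0"
  shows "(\<lambda>w. Gf r1 r2 a1 a2 a3 a4 (w + \<i> * of_real \<epsilon>) - 1 / (w + \<i> * of_real \<epsilon> + \<i>)) holomorphic_on {w. Im w > - \<epsilon>}"
proof -
  have "(Gf r1 r2 a1 a2 a3 a4 \<circ> (\<lambda>w. w + \<i> * of_real \<epsilon>)) holomorphic_on {w. Im w > - \<epsilon>}"
    by (rule holomorphic_on_compose_gen[OF _ Gf_holo]) (auto intro!: holomorphic_intros)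
  moreover have "(\<lambda>w. 1 / (w + \<i> * of_real \<epsilon> + \<i>)) holomorphic_on {w. Im w > - \<epsilon>}"
  proof (intro holomorphic_intros)
    fix w assume "w \<in> {w. Im w > - \<epsilon>}"
    then show "w + \<i> * of_real \<epsilon> + \<i> \<noteq> 0" using assms by (auto simp: complex_eq_iff)
  qed
  ultimately show ?thesis by (simp add: o_def holomorphic_on_diff)
qed

lemma strip_bound:
  assumes D: "D = \<bar>r1\<bar> + \<bar>r2\<bar> + \<bar>a1\<bar> + \<bar>a2\<bar> + \<bar>a3\<bar> + \<bar>a4\<bar> + 1"
    and "\<rho> \<ge> 2 * D" "\<epsilon> > 0"
  shows "norm (integral {-\<rho>..\<rho>} (\<lambda>x. Gf r1 r2 a1 a2 a3 a4 (of_real x + \<i> * of_real \<epsilon>) - 1 / (of_real x + \<i> * of_real \<epsilon> + \<i>)))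
      \<le> 4 * (30 * D + 1) / \<rho>"
proof -
  have D0: "D > 0" using D by linarith
  have r0: "\<rho> > 0" using assms D0 by linarith
  show ?thesis
  proof (rule rect_bound[OF H_holo[OF assms(3)] assms(3) r0])
    show "0 \<le> 30 * D + 1" using D0 by simp
    fix w :: complex assume w: "Im w \<ge> 0" "norm w \<ge> \<rho>"
    define z where "z = w + \<i> * of_real \<epsilon>"
    have imz: "Im z > 0" unfolding z_def using w assms by simp
    have "norm w ^ 2 \<le> norm z ^ 2" unfolding z_def cmod_power2 using w assms
      by (simp add: power2_eq_square algebra_simps)
    hence nwz: "norm w \<le> norm z" by (simp add: power_mono_iff)
    have "norm (Gf r1 r2 a1 a2 a3 a4 z - 1 / (z + \<i>)) \<le> (30 * D + 1) / (norm z)^2"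
      by (rule G_asym[OF imz D]) (use nwz w assms(2) in linarith)
    also have "\<dots> \<le> (30 * D + 1) / \<rho>^2"
    proof -
      have "0 < norm z" using r0 w nwz by linarith
      then show ?thesis using D0 r0 w nwz by (intro divide_left_mono power_mono) auto
    qed
    finally show "norm (Gf r1 r2 a1 a2 a3 a4 (w + \<i> * of_real \<epsilon>) - 1 / (w + \<i> * of_real \<epsilon> + \<i>)) \<le> (30 * D + 1) / \<rho>^2"
      unfolding z_def .
  qed
qed

lemma norm_G_strip:
  fixes x \<epsilon> :: real
  assumes "x \<notin> {a1, a2, a3, a4}" "0 < \<epsilon>" "\<epsilon> \<le> 1"
  shows "norm (Gf r1 r2 a1 a2 a3 a4 (of_real x + \<i> * of_real \<epsilon>))
    \<le> (\<bar>x - r1\<bar> + 1) * (\<bar>x - r2\<bar> + 1) * (1 / (sqrt \<bar>x - a1\<bar> * sqrt \<bar>x - a2\<bar> * sqrt \<bar>x - a3\<bar> * sqrt \<bar>x - a4\<bar>))"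
proof -
  define z where "z = of_real x + \<i> * of_real \<epsilon>"
  have nlow: "\<bar>x - c\<bar> \<le> norm (z - of_real c)" for c
    using abs_Re_le_cmod[of "z - of_real c"] by (simp add: z_def)
  have nup: "norm (z - of_real c) \<le> \<bar>x - c\<bar> + 1" for c
    using cmod_le[of "z - of_real c"] assms by (simp add: z_def)
  have sup: "sqrt (norm (z - of_real c)) \<le> \<bar>x - c\<bar> + 1" for c
  proof -
    have "sqrt (norm (z - of_real c)) \<le> sqrt (\<bar>x - c\<bar> + 1)" using nup by simp
    also have "\<dots> \<le> \<bar>x - c\<bar> + 1"
    proof -
      have s1: "1 \<le> sqrt (\<bar>x - c\<bar> + 1)" by simp
      have "sqrt (\<bar>x - c\<bar> + 1) * 1 \<le> sqrt (\<bar>x - c\<bar> + 1) * sqrt (\<bar>x - c\<bar> + 1)"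
        using s1 by (intro mult_left_mono) auto
      then show ?thesis by simp
    qed
    finally show ?thesis .
  qed
  have slow: "sqrt \<bar>x - c\<bar> \<le> sqrt (norm (z - of_real c))" for c using nlow by simp
  have pos: "0 < sqrt \<bar>x - c\<bar>" if "c \<in> {a1, a2, a3, a4}" for c using that assms(1) by auto
  have "norm (Gf r1 r2 a1 a2 a3 a4 z) = sqrt (norm (z - of_real r1)) * sqrt (norm (z - of_real r2)) /
     (sqrt (norm (z - of_real a1)) * sqrt (norm (z - of_real a2)) * sqrt (norm (z - of_real a3)) * sqrt (norm (z - of_real a4)))"
    unfolding Gf_def by (simp add: norm_mult norm_divide norm_sq)
  also have "\<dots> \<le> ((\<bar>x - r1\<bar> + 1) * (\<bar>x - r2\<bar> + 1)) / (sqrt \<bar>x - a1\<bar> * sqrt \<bar>x - a2\<bar> * sqrt \<bar>x - a3\<bar> * sqrt \<bar>x - a4\<bar>)"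
  proof (rule frac_le)
    show "0 \<le> (\<bar>x - r1\<bar> + 1) * (\<bar>x - r2\<bar> + 1)" by simp
    show "sqrt (norm (z - of_real r1)) * sqrt (norm (z - of_real r2)) \<le> (\<bar>x - r1\<bar> + 1) * (\<bar>x - r2\<bar> + 1)"
      by (intro mult_mono sup) auto
    show "0 < sqrt \<bar>x - a1\<bar> * sqrt \<bar>x - a2\<bar> * sqrt \<bar>x - a3\<bar> * sqrt \<bar>x - a4\<bar>"
      using pos by (intro mult_pos_pos) auto
    show "sqrt \<bar>x - a1\<bar> * sqrt \<bar>x - a2\<bar> * sqrt \<bar>x - a3\<bar> * sqrt \<bar>x - a4\<bar> \<le>
      sqrt (norm (z - of_real a1)) * sqrt (norm (z - of_real a2)) * sqrt (norm (z - of_real a3)) * sqrt (norm (z - of_real a4))"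
      by (intro mult_mono slow) auto
  qed
  finally show ?thesis unfolding z_def by simp
qed

lemma Gf_isCont_real:
  assumes "x \<notin> {r1, r2, a1, a2, a3, a4}"
  shows "isCont (Gf r1 r2 a1 a2 a3 a4) (of_real x)"
proof -
  have c: "isCont (\<lambda>z. sq (z - of_real c)) (of_real x)" if "c \<noteq> x" for c
  proof -
    have "isCont sq (of_real x - of_real c)"
      using sq_cont_real[of "x - c"] that by (simp add: of_real_diff)
    then show ?thesis by (intro continuous_at_compose[of _ "\<lambda>z. z - of_real c" sq, unfolded o_def] continuous_intros)
  qed
  have nz: "sq (of_real x - of_real c) \<noteq> 0" if "c \<noteq> x" for c
    by (rule sq_nz) (use that in simp)
  show ?thesis unfolding Gf_def[abs_def]
    using assms by (intro continuous_intros c) (auto simp: nz)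
qed

lemma boundary_bound:
  fixes a1 a2 a3 a4 r1 r2 \<rho> :: real
  assumes "a1 < a2" "a2 < a3" "a3 < a4"
    and D: "D = \<bar>r1\<bar> + \<bar>r2\<bar> + \<bar>a1\<bar> + \<bar>a2\<bar> + \<bar>a3\<bar> + \<bar>a4\<bar> + 1"
    and "\<rho> \<ge> 2 * D"
  defines "P \<equiv> {r1, r2, a1, a2, a3, a4}"
  defines "g \<equiv> (\<lambda>x. if x \<in> P then 0 else Gf r1 r2 a1 a2 a3 a4 (of_real x) - 1 / (of_real x + \<i>))"
  shows "g integrable_on {-\<rho>..\<rho>}" "norm (integral {-\<rho>..\<rho>} g) \<le> 4 * (30 * D + 1) / \<rho>"
proof -
  have D0: "D > 0" using D by linarith
  have r0: "\<rho> > 0" using assms D0 by linarith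
  have finP: "finite P" unfolding P_def by simp
  define ep where "ep = (\<lambda>k::nat. inverse (real (Suc k)))"
  have ep0: "0 < ep k" "ep k \<le> 1" for k unfolding ep_def by (auto simp: field_simps)
  define Hk where "Hk = (\<lambda>k x. Gf r1 r2 a1 a2 a3 a4 (of_real x + \<i> * of_real (ep k)) - 1 / (of_real x + \<i> * of_real (ep k) + \<i>))"
  define f where "f = (\<lambda>k x. if x \<in> P then 0 else Hk k x)"
  define \<delta> where "\<delta> = min (a2 - a1) (min (a3 - a2) (a4 - a3))"
  have dl: "0 < \<delta>" "\<delta> \<le> a2 - a1" "\<delta> \<le> a3 - a2" "\<delta> \<le> a4 - a3" unfolding \<delta>_def using assms(1-3) by (auto simp: min_def)
  define K where "K = (1 / sqrt (\<delta>/2))^3"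
  define Q where "Q = (\<rho> + \<bar>r1\<bar> + 1) * (\<rho> + \<bar>r2\<bar> + 1)"
  define hd where "hd = (\<lambda>x. Q * K * (1 / sqrt \<bar>x - a1\<bar> + 1 / sqrt \<bar>x - a2\<bar> + 1 / sqrt \<bar>x - a3\<bar> + 1 / sqrt \<bar>x - a4\<bar>) + 1)"
  have K0: "K \<ge> 0" unfolding K_def using dl by simp
  have Q0: "Q \<ge> 0" unfolding Q_def using r0 by simp
  have ain: "-\<rho> \<le> c \<and> c \<le> \<rho>" if "c \<in> {a1, a2, a3, a4}" for c
  proof -
    note nn = abs_ge_zero[of r1] abs_ge_zero[of r2] abs_ge_zero[of a1] abs_ge_zero[of a2] abs_ge_zero[of a3] abs_ge_zero[of a4]
    have "\<bar>a1\<bar> \<le> \<rho>" "\<bar>a2\<bar> \<le> \<rho>" "\<bar>a3\<bar> \<le> \<rho>" "\<bar>a4\<bar> \<le> \<rho>"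
      using assms(5) D nn by linarith+
    then have "\<bar>c\<bar> \<le> \<rho>" using that by auto
    then show ?thesis by (simp add: abs_le_iff)
  qed
  have Hcont: "continuous_on {-\<rho>..\<rho>} (Hk k)" for k
  proof -
    have "continuous_on {w. Im w > - ep k} (\<lambda>w. Gf r1 r2 a1 a2 a3 a4 (w + \<i> * of_real (ep k)) - 1 / (w + \<i> * of_real (ep k) + \<i>))"
      by (rule holomorphic_on_imp_continuous_on[OF H_holo]) (rule ep0)
    then have cc: "continuous_on (of_real ` {-\<rho>..\<rho>}) (\<lambda>w. Gf r1 r2 a1 a2 a3 a4 (w + \<i> * of_real (ep k)) - 1 / (w + \<i> * of_real (ep k) + \<i>))"
      by (rule continuous_on_subset) (use ep0 in auto)
    have "continuous_on {-\<rho>..\<rho>} ((\<lambda>w. Gf r1 r2 a1 a2 a3 a4 (w + \<i> * of_real (ep k)) - 1 / (w + \<i> * of_real (ep k) + \<i>)) \<circ> of_real)"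
    proof (rule continuous_on_compose[OF _ cc])
      show "continuous_on {-\<rho>..\<rho>} (of_real :: real \<Rightarrow> complex)"
        using continuous_on_of_real[OF continuous_on_id, of "{-\<rho>..\<rho>}"] by (simp add: id_def)
    qed
    then show ?thesis unfolding Hk_def o_def .
  qed
  have fint: "f k integrable_on {-\<rho>..\<rho>}" for k
    by (rule integrable_spike_finite[OF finP _ integrable_continuous_interval[OF Hcont[of k]]]) (auto simp: f_def)
  have fval: "integral {-\<rho>..\<rho>} (f k) = integral {-\<rho>..\<rho>} (Hk k)" for k
    by (rule integral_spike[of P]) (auto simp: f_def negligible_finite[OF finP])
  have hint: "hd integrable_on {-\<rho>..\<rho>}"
  proof -
    have i: "(\<lambda>x. 1 / sqrt \<bar>x - c\<bar>) integrable_on {-\<rho>..\<rho>}" if "c \<in> {a1, a2, a3, a4}" for c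
      using ain[OF that] by (intro inv_sqrt_integrable) auto
    have "(\<lambda>x. 1 / sqrt \<bar>x - a1\<bar> + 1 / sqrt \<bar>x - a2\<bar> + 1 / sqrt \<bar>x - a3\<bar> + 1 / sqrt \<bar>x - a4\<bar>) integrable_on {-\<rho>..\<rho>}"
      by (intro integrable_add i) auto
    then have "(\<lambda>x. (Q * K) *\<^sub>R (1 / sqrt \<bar>x - a1\<bar> + 1 / sqrt \<bar>x - a2\<bar> + 1 / sqrt \<bar>x - a3\<bar> + 1 / sqrt \<bar>x - a4\<bar>)) integrable_on {-\<rho>..\<rho>}"
      by (rule integrable_cmul)
    then show ?thesis unfolding hd_def by (intro integrable_add) auto
  qed
  have hd1: "hd x \<ge> 1" for x
    unfolding hd_def using Q0 K0 by (intro add_increasing mult_nonneg_nonneg) auto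
  have dom: "norm (f k x) \<le> hd x" if x: "x \<in> {-\<rho>..\<rho>}" for k x
  proof (cases "x \<in> P")
    case True then show ?thesis using hd1[of x] by (simp add: f_def)
  next
    case False
    have xa: "x \<notin> {a1, a2, a3, a4}" using False by (auto simp: P_def)
    have n1: "norm (Gf r1 r2 a1 a2 a3 a4 (of_real x + \<i> * of_real (ep k)))
      \<le> (\<bar>x - r1\<bar> + 1) * (\<bar>x - r2\<bar> + 1) * (1 / (sqrt \<bar>x - a1\<bar> * sqrt \<bar>x - a2\<bar> * sqrt \<bar>x - a3\<bar> * sqrt \<bar>x - a4\<bar>))"
      by (rule norm_G_strip[OF xa ep0])
    also have "\<dots> \<le> Q * (K * (1 / sqrt \<bar>x - a1\<bar> + 1 / sqrt \<bar>x - a2\<bar> + 1 / sqrt \<bar>x - a3\<bar> + 1 / sqrt \<bar>x - a4\<bar>))"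
    proof (rule mult_mono)
      show "(\<bar>x - r1\<bar> + 1) * (\<bar>x - r2\<bar> + 1) \<le> Q" unfolding Q_def using x
        by (intro mult_mono) auto
      show "1 / (sqrt \<bar>x - a1\<bar> * sqrt \<bar>x - a2\<bar> * sqrt \<bar>x - a3\<bar> * sqrt \<bar>x - a4\<bar>)
        \<le> K * (1 / sqrt \<bar>x - a1\<bar> + 1 / sqrt \<bar>x - a2\<bar> + 1 / sqrt \<bar>x - a3\<bar> + 1 / sqrt \<bar>x - a4\<bar>)"
        unfolding K_def by (rule inv4_le_sum[OF assms(1-3) xa dl])
    qed (use Q0 in auto)
    finally have n1': "norm (Gf r1 r2 a1 a2 a3 a4 (of_real x + \<i> * of_real (ep k))) \<le> hd x - 1"
      unfolding hd_def by (simp add: mult_ac)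
    have "1 \<le> norm (of_real x + \<i> * of_real (ep k) + \<i>)"
    proof -
      have "1 \<le> \<bar>Im (of_real x + \<i> * of_real (ep k) + \<i>)\<bar>" using ep0[of k] by simp
      also have "\<dots> \<le> norm (of_real x + \<i> * of_real (ep k) + \<i>)" by (rule abs_Im_le_cmod)
      finally show ?thesis .
    qed
    then have n2: "norm (1 / (of_real x + \<i> * of_real (ep k) + \<i>)) \<le> 1"
      by (simp add: norm_divide divide_le_eq)
    have "norm (f k x) \<le> norm (Gf r1 r2 a1 a2 a3 a4 (of_real x + \<i> * of_real (ep k))) + norm (1 / (of_real x + \<i> * of_real (ep k) + \<i>))"
      using False by (simp add: f_def Hk_def norm_triangle_ineq4)
    also have "\<dots> \<le> hd x" using n1' n2 by linarith
    finally show ?thesis .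
  qed
  have conv: "(\<lambda>k. f k x) \<longlonglongrightarrow> g x" if "x \<in> {-\<rho>..\<rho>}" for x
  proof (cases "x \<in> P")
    case True then show ?thesis by (simp add: f_def g_def)
  next
    case False
    have epl: "(\<lambda>k. of_real x + \<i> * of_real (ep k)) \<longlonglongrightarrow> (of_real x :: complex)"
    proof -
      have "(\<lambda>k. of_real x + \<i> * of_real (ep k)) \<longlonglongrightarrow> (of_real x + \<i> * of_real 0 :: complex)"
        unfolding ep_def by (intro tendsto_intros LIMSEQ_inverse_real_of_nat)
      then show ?thesis by simp
    qed
    have c1: "(\<lambda>k. Gf r1 r2 a1 a2 a3 a4 (of_real x + \<i> * of_real (ep k))) \<longlonglongrightarrow> Gf r1 r2 a1 a2 a3 a4 (of_real x)"
      by (rule isCont_tendsto_compose[OF Gf_isCont_real epl]) (use False in \<open>simp add: P_def\<close>)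
    have c2: "(\<lambda>k. 1 / (of_real x + \<i> * of_real (ep k) + \<i>)) \<longlonglongrightarrow> 1 / (of_real x + \<i>)"
      by (intro tendsto_intros epl) (auto simp: complex_eq_iff)
    have "(\<lambda>k. Hk k x) \<longlonglongrightarrow> Gf r1 r2 a1 a2 a3 a4 (of_real x) - 1 / (of_real x + \<i>)"
      unfolding Hk_def by (rule tendsto_diff[OF c1 c2])
    then show ?thesis using False by (simp add: f_def g_def)
  qed
  note dc = dominated_convergence[OF fint hint dom conv]
  show "g integrable_on {-\<rho>..\<rho>}" by (rule dc(1))
  have "(\<lambda>k. norm (integral {-\<rho>..\<rho>} (f k))) \<longlonglongrightarrow> norm (integral {-\<rho>..\<rho>} g)"
    by (intro tendsto_norm dc(2))
  moreover have "norm (integral {-\<rho>..\<rho>} (f k)) \<le> 4 * (30 * D + 1) / \<rho>" for k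
    unfolding fval Hk_def by (rule strip_bound[OF D assms(5) ep0(1)])
  ultimately show "norm (integral {-\<rho>..\<rho>} g) \<le> 4 * (30 * D + 1) / \<rho>"
    by (intro LIMSEQ_le_const2) auto
qed

lemma Im_inv_xi: "Im (1 / (complex_of_real x + \<i>)) = - 1 / (x^2 + 1)"
proof -
  have "complex_of_real x + \<i> = Complex x 1" by (simp add: complex_eq_iff)
  then show ?thesis by (simp add: Im_divide power2_eq_square)
qed

lemma arctan_integral:
  assumes "\<rho> \<ge> 0"
  shows "((\<lambda>x. 1 / (x^2 + 1)) has_integral (2 * arctan \<rho>)) {-\<rho>..\<rho>}"
proof -
  have "((\<lambda>x. 1 / (x^2 + 1)) has_integral (arctan \<rho> - arctan (-\<rho>))) {-\<rho>..\<rho>}"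
  proof (rule fundamental_theorem_of_calculus)
    show "-\<rho> \<le> \<rho>" using assms by simp
    fix x :: real
    have "(arctan has_real_derivative 1 / (x^2 + 1)) (at x)"
      using DERIV_arctan[of x] by (simp add: inverse_eq_divide add.commute)
    then show "(arctan has_vector_derivative 1 / (x^2 + 1)) (at x within {-\<rho>..\<rho>})"
      by (simp add: has_real_derivative_iff_has_vector_derivative has_vector_derivative_at_within)
  qed
  then show ?thesis by (simp add: arctan_minus)
qed

lemma core_rho:
  fixes a1 a2 a3 a4 r1 r2 \<rho> :: real
  assumes ord: "a1 < a2" "a2 < a3" "a3 < a4" "a1 \<le> r1" "r1 \<le> r2" "r2 \<le> a4" "r1 \<le> a3" "a2 \<le> r2"
    and D: "D = \<bar>r1\<bar> + \<bar>r2\<bar> + \<bar>a1\<bar> + \<bar>a2\<bar> + \<bar>a3\<bar> + \<bar>a4\<bar> + 1"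
    and rho: "\<rho> \<ge> 2 * D"
  defines "W \<equiv> Wf r1 r2 a1 a2 a3 a4"
  defines "I1 \<equiv> {a1..min r1 a2}" and "I2 \<equiv> {max r1 a2..min r2 a3}" and "I3 \<equiv> {max r2 a3..a4}"
  shows "W integrable_on I1" "W integrable_on I2" "W integrable_on I3"
    "\<bar>integral I1 W + integral I2 W + integral I3 W - 2 * arctan \<rho>\<bar> \<le> 4 * (30 * D + 1) / \<rho>"
proof -
  define P where "P = {r1, r2, a1, a2, a3, a4}"
  define g where "g = (\<lambda>x. if x \<in> P then 0 else Gf r1 r2 a1 a2 a3 a4 (of_real x) - 1 / (of_real x + \<i>))"
  define T where "T = {-\<rho>..\<rho>}"
  have finP: "finite P" unfolding P_def by simp
  have gi: "g integrable_on T" and gb: "norm (integral T g) \<le> 4 * (30 * D + 1) / \<rho>"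
    using boundary_bound[OF ord(1-3) D rho] unfolding g_def P_def T_def by auto
  have D0: "D > 0" using D by linarith
  have r0: "\<rho> \<ge> 0" using rho D0 by linarith
  have a1r: "-\<rho> \<le> a1" and a4r: "a4 \<le> \<rho>"
  proof -
    note nn = abs_ge_zero[of r1] abs_ge_zero[of r2] abs_ge_zero[of a1] abs_ge_zero[of a2] abs_ge_zero[of a3] abs_ge_zero[of a4]
    have "\<bar>a1\<bar> \<le> \<rho>" "\<bar>a4\<bar> \<le> \<rho>" using rho D nn by linarith+
    then show "-\<rho> \<le> a1" "a4 \<le> \<rho>" by (simp_all add: abs_le_iff)
  qed
  have subT: "I1 \<subseteq> T" "I2 \<subseteq> T" "I3 \<subseteq> T"
    unfolding I1_def I2_def I3_def T_def using a1r a4r ord by auto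
  have IT: "I1 \<inter> T = I1" "I2 \<inter> T = I2" "I3 \<inter> T = I3" using subT by auto
  have Imgi: "(\<lambda>x. Im (g x)) integrable_on T"
    using integrable_linear[OF gi bounded_linear_Im] by (simp add: o_def)
  have Imgv: "integral T (\<lambda>x. Im (g x)) = Im (integral T g)"
    using integral_linear[OF gi bounded_linear_Im] by (simp add: o_def)
  have arc: "((\<lambda>x. 1 / (x^2 + 1)) has_integral (2 * arctan \<rho>)) T"
    unfolding T_def by (rule arctan_integral[OF r0])
  define \<psi> where "\<psi> = (\<lambda>x. 1 / (x^2 + 1) - Im (g x))"
  have psi_has: "(\<psi> has_integral (2 * arctan \<rho> - Im (integral T g))) T"
    unfolding \<psi>_def Imgv[symmetric] by (intro has_integral_diff arc integrable_integral Imgi)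
  define \<chi>1 where "\<chi>1 = (\<lambda>x. if x \<in> I1 then W x else 0)"
  define \<chi>2 where "\<chi>2 = (\<lambda>x. if x \<in> I2 then W x else 0)"
  define \<chi>3 where "\<chi>3 = (\<lambda>x. if x \<in> I3 then W x else 0)"
  have d12: "\<not> (x \<in> I1 \<and> x \<in> I2)" if "x \<notin> P" for x
  proof
    assume "x \<in> I1 \<and> x \<in> I2"
    then have "x \<le> min r1 a2" "max r1 a2 \<le> x" unfolding I1_def I2_def by auto
    then have "x = r1 \<or> x = a2" by (auto simp: min_def max_def split: if_splits)
    then show False using that by (auto simp: P_def)
  qed
  have d23: "\<not> (x \<in> I2 \<and> x \<in> I3)" if "x \<notin> P" for x
  proof
    assume "x \<in> I2 \<and> x \<in> I3"
    then have "x \<le> min r2 a3" "max r2 a3 \<le> x" unfolding I2_def I3_def by auto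
    then have "x = r2 \<or> x = a3" by (auto simp: min_def max_def split: if_splits)
    then show False using that by (auto simp: P_def)
  qed
  have d13: "\<not> (x \<in> I1 \<and> x \<in> I3)" for x
  proof
    assume "x \<in> I1 \<and> x \<in> I3"
    then have "x \<le> min r1 a2" "max r2 a3 \<le> x" unfolding I1_def I3_def by auto
    moreover have "min r1 a2 \<le> a2" "a3 \<le> max r2 a3" by simp_all
    ultimately show False using ord by linarith
  qed
  have ptw: "\<psi> x = \<chi>1 x + \<chi>2 x + \<chi>3 x" if "x \<notin> P" for x
  proof -
    have xP: "x \<notin> {r1, r2, a1, a2, a3, a4}" using that by (simp add: P_def)
    have "\<psi> x = - Im (Gf r1 r2 a1 a2 a3 a4 (of_real x))"
      using that by (simp add: \<psi>_def g_def Im_inv_xi)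
    also have "\<dots> = (if x \<in> I1 \<or> x \<in> I2 \<or> x \<in> I3 then W x else 0)"
      unfolding Im_G_real[OF ord xP] W_def I1_def I2_def I3_def by simp
    also have "\<dots> = \<chi>1 x + \<chi>2 x + \<chi>3 x"
      using d12[OF that] d23[OF that] d13[of x] unfolding \<chi>1_def \<chi>2_def \<chi>3_def by auto
    finally show ?thesis .
  qed
  have psi_int: "\<psi> integrable_on T" using psi_has by blast
  have chi_eq: "(if x \<in> I then \<psi> x else 0) = (if x \<in> I then W x else 0)"
    if "x \<notin> P" "I = I1 \<or> I = I2 \<or> I = I3" for x I
  proof -
    have xP: "x \<notin> {r1, r2, a1, a2, a3, a4}" using that by (simp add: P_def)
    have "\<psi> x = \<chi>1 x + \<chi>2 x + \<chi>3 x" by (rule ptw[OF that(1)])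
    then show ?thesis
      using that(2) d12[OF that(1)] d23[OF that(1)] d13[of x] unfolding \<chi>1_def \<chi>2_def \<chi>3_def by auto
  qed
  have chi_has: "((\<lambda>x. if x \<in> I then W x else 0) has_integral integral I \<psi>) T \<and> (W has_integral integral I \<psi>) I"
    if I: "I = I1 \<or> I = I2 \<or> I = I3" for I
  proof -
    have sub: "I \<subseteq> T" using I subT by auto
    obtain c d where cd: "I = {c..d}" using I unfolding I1_def I2_def I3_def by auto
    have "\<psi> integrable_on I"
      using integrable_subinterval_real[OF psi_int[unfolded T_def], of c d] sub cd unfolding T_def by auto
    then have "(\<psi> has_integral integral I \<psi>) I" by (rule integrable_integral)
    then have h0: "((\<lambda>x. if x \<in> I then \<psi> x else 0) has_integral integral I \<psi>) T"
      using has_integral_restrict[OF sub] by blast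
    have h1: "((\<lambda>x. if x \<in> I then W x else 0) has_integral integral I \<psi>) T"
      by (rule has_integral_spike_finite[OF finP _ h0]) (use chi_eq I in auto)
    then have "(W has_integral integral I \<psi>) I"
      using has_integral_restrict[OF sub] by blast
    with h1 show ?thesis by blast
  qed
  have c1: "(\<chi>1 has_integral integral I1 W) T" and w1: "W integrable_on I1"
    using chi_has[of I1] unfolding \<chi>1_def by (auto dest: integral_unique)
  have c2: "(\<chi>2 has_integral integral I2 W) T" and w2: "W integrable_on I2"
    using chi_has[of I2] unfolding \<chi>2_def by (auto dest: integral_unique)
  have c3: "(\<chi>3 has_integral integral I3 W) T" and w3: "W integrable_on I3"
    using chi_has[of I3] unfolding \<chi>3_def by (auto dest: integral_unique)
  show "W integrable_on I1" "W integrable_on I2" "W integrable_on I3" using w1 w2 w3 .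
  have hs: "((\<lambda>x. \<chi>1 x + \<chi>2 x + \<chi>3 x) has_integral (integral I1 W + integral I2 W + integral I3 W)) T"
    by (intro has_integral_add c1 c2 c3)
  have "(\<psi> has_integral (integral I1 W + integral I2 W + integral I3 W)) T"
    by (rule has_integral_spike_finite[OF finP _ hs]) (use ptw in auto)
  then have "integral I1 W + integral I2 W + integral I3 W = 2 * arctan \<rho> - Im (integral T g)"
    using psi_has has_integral_unique by blast
  then have "\<bar>integral I1 W + integral I2 W + integral I3 W - 2 * arctan \<rho>\<bar> = \<bar>Im (integral T g)\<bar>" by simp
  also have "\<dots> \<le> norm (integral T g)" by (rule abs_Im_le_cmod)
  also have "\<dots> \<le> 4 * (30 * D + 1) / \<rho>" by (rule gb)
  finally show "\<bar>integral I1 W + integral I2 W + integral I3 W - 2 * arctan \<rho>\<bar> \<le> 4 * (30 * D + 1) / \<rho>" .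
qed

lemma core:
  fixes a1 a2 a3 a4 r1 r2 :: real
  assumes ord: "a1 < a2" "a2 < a3" "a3 < a4" "a1 \<le> r1" "r1 \<le> r2" "r2 \<le> a4" "r1 \<le> a3" "a2 \<le> r2"
  shows "Wf r1 r2 a1 a2 a3 a4 integrable_on {a1..min r1 a2}"
    "Wf r1 r2 a1 a2 a3 a4 integrable_on {max r1 a2..min r2 a3}"
    "Wf r1 r2 a1 a2 a3 a4 integrable_on {max r2 a3..a4}"
    "integral {a1..min r1 a2} (Wf r1 r2 a1 a2 a3 a4) + integral {max r1 a2..min r2 a3} (Wf r1 r2 a1 a2 a3 a4)
      + integral {max r2 a3..a4} (Wf r1 r2 a1 a2 a3 a4) = pi"
proof -
  define D where "D = \<bar>r1\<bar> + \<bar>r2\<bar> + \<bar>a1\<bar> + \<bar>a2\<bar> + \<bar>a3\<bar> + \<bar>a4\<bar> + 1"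
  define S where "S = integral {a1..min r1 a2} (Wf r1 r2 a1 a2 a3 a4) + integral {max r1 a2..min r2 a3} (Wf r1 r2 a1 a2 a3 a4)
      + integral {max r2 a3..a4} (Wf r1 r2 a1 a2 a3 a4)"
  define C where "C = 4 * (30 * D + 1)"
  note cr = core_rho[OF ord D_def order_refl]
  show "Wf r1 r2 a1 a2 a3 a4 integrable_on {a1..min r1 a2}"
    "Wf r1 r2 a1 a2 a3 a4 integrable_on {max r1 a2..min r2 a3}"
    "Wf r1 r2 a1 a2 a3 a4 integrable_on {max r2 a3..a4}" using cr(1-3) .
  have bnd: "\<bar>S - 2 * arctan \<rho>\<bar> \<le> C / \<rho>" if "\<rho> \<ge> 2 * D" for \<rho>
    using core_rho(4)[OF ord D_def that] unfolding S_def C_def .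
  have D0: "D > 0" unfolding D_def by simp
  have lim1: "((\<lambda>\<rho>. S - 2 * arctan \<rho>) \<longlongrightarrow> S - 2 * (pi / 2)) at_top"
    by (intro tendsto_intros tendsto_arctan_at_top)
  have lim2: "((\<lambda>\<rho>. S - 2 * arctan \<rho>) \<longlongrightarrow> 0) at_top"
  proof (rule tendsto_0_le[where K = C])
    show "((\<lambda>\<rho>::real. inverse \<rho>) \<longlongrightarrow> 0) at_top"
      by (rule tendsto_inverse_0_at_top[OF filterlim_ident])
    have "eventually (\<lambda>\<rho>::real. \<rho> \<ge> 2 * D) at_top" by (rule eventually_ge_at_top)
    then show "eventually (\<lambda>\<rho>. norm (S - 2 * arctan \<rho>) \<le> norm (inverse \<rho>) * C) at_top"
    proof (rule eventually_mono)
      fix \<rho> :: real assume r: "\<rho> \<ge> 2 * D"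
      then have "\<rho> > 0" using D0 by linarith
      then show "norm (S - 2 * arctan \<rho>) \<le> norm (inverse \<rho>) * C"
        using bnd[OF r] by (simp add: divide_inverse mult.commute)
    qed
  qed
  have "S - 2 * (pi / 2) = 0" using tendsto_unique[OF _ lim1 lim2] by simp
  then show "integral {a1..min r1 a2} (Wf r1 r2 a1 a2 a3 a4) + integral {max r1 a2..min r2 a3} (Wf r1 r2 a1 a2 a3 a4)
      + integral {max r2 a3..a4} (Wf r1 r2 a1 a2 a3 a4) = pi" unfolding S_def by simp
qed

lemma Gf_sq_real:
  "(Gf r1 r2 a1 a2 a3 a4 (of_real x))^2 = of_real ((x - r1) * (x - r2) / ((x - a1) * (x - a2) * (x - a3) * (x - a4)))"
  unfolding Gf_def power_divide power_mult_distrib sq_square by simp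

lemma norm_Gf_real: "norm (Gf r1 r2 a1 a2 a3 a4 (of_real x)) = Wf r1 r2 a1 a2 a3 a4 x"
  unfolding Gf_def Wf_def by (simp add: norm_mult norm_divide norm_sq flip: of_real_diff)

lemma cut_val:
  assumes ord: "a1 < a2" "a2 < a3" "a3 < a4" "a1 \<le> r1" "r1 \<le> r2" "r2 \<le> a4" "r1 \<le> a3" "a2 \<le> r2"
    and xP: "x \<notin> {r1, r2, a1, a2, a3, a4}"
    and xI: "x \<in> {a1..min r1 a2} \<or> x \<in> {max r1 a2..min r2 a3} \<or> x \<in> {max r2 a3..a4}"
  shows "- ((x - r1) * (x - r2) / ((x - a1) * (x - a2) * (x - a3) * (x - a4))) = (Wf r1 r2 a1 a2 a3 a4 x)^2"
proof -
  define G where "G = Gf r1 r2 a1 a2 a3 a4 (of_real x)"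
  define W where "W = Wf r1 r2 a1 a2 a3 a4 x"
  have im: "Im G = - W" unfolding G_def W_def using Im_G_real[OF ord xP] xI by simp
  have nm: "norm G = W" unfolding G_def W_def by (rule norm_Gf_real)
  have "(Re G)^2 + (Im G)^2 = W^2" using nm by (simp add: cmod_power2[symmetric])
  then have "Re G = 0" using im by simp
  then have "G = - \<i> * of_real W" using im by (simp add: complex_eq_iff)
  then have "G^2 = of_real (- (W * W))" by (simp add: complex_eq_iff power2_eq_square)
  moreover have "G^2 = of_real ((x - r1) * (x - r2) / ((x - a1) * (x - a2) * (x - a3) * (x - a4)))"
    unfolding G_def by (rule Gf_sq_real)
  ultimately show ?thesis unfolding W_def[symmetric] by (metis minus_equation_iff of_real_eq_iff power2_eq_square)
qed

lemma interlace_core: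
  fixes \<alpha> b c a B C d f g :: real
  assumes "\<alpha> > 0" "0 < b" "b < c" "a * g = B * f - C * d"
    and R0: "b * c * a^2 - \<alpha> * c * d^2 - \<alpha> * b * f^2 > 0"
  shows "- (b + c) * a^2 - c * B^2 - b * C^2 + (\<alpha> - c) * d^2 + (\<alpha> - b) * f^2 + \<alpha> * g^2 < 0"
proof -
  define X where "X = c * B^2 + b * C^2"
  define Y where "Y = b * f^2 + c * d^2"
  have c0: "c > 0" using assms by linarith
  have X0: "X \<ge> 0" unfolding X_def using assms c0 by (simp add: add_nonneg_nonneg)
  have Y0: "Y \<ge> 0" unfolding Y_def using assms c0 by (simp add: add_nonneg_nonneg)
  have aY: "\<alpha> * Y < b * c * a^2" using R0 unfolding Y_def by (simp add: algebra_simps)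
  have a0: "a \<noteq> 0"
  proof
    assume "a = 0"
    then have "\<alpha> * Y < 0" using aY by simp
    moreover have "\<alpha> * Y \<ge> 0" using assms(1) Y0 by simp
    ultimately show False by simp
  qed
  have idt: "X * Y - (B * f - C * d)^2 * (b * c) = (c * B * d + b * C * f)^2"
    unfolding X_def Y_def by (simp add: power2_eq_square algebra_simps)
  have cs: "(a * g)^2 * (b * c) \<le> X * Y"
    using idt assms(4) by (metis diff_ge_0_iff_ge zero_le_power2)
  have "(a^2 * (b * c)) * (\<alpha> * g^2) = \<alpha> * ((a * g)^2 * (b * c))" by (simp add: power2_eq_square algebra_simps)
  also have "\<dots> \<le> \<alpha> * (X * Y)" using cs assms(1) by simp
  also have "\<dots> = X * (\<alpha> * Y)" by simp
  also have "\<dots> \<le> X * (b * c * a^2)" using aY X0 by (simp add: mult_left_mono)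
  also have "\<dots> = (a^2 * (b * c)) * X" by simp
  finally have "(a^2 * (b * c)) * (\<alpha> * g^2) \<le> (a^2 * (b * c)) * X" .
  moreover have "a^2 * (b * c) > 0" using a0 assms(2) c0 by simp
  ultimately have gX: "\<alpha> * g^2 \<le> X" using mult_le_cancel_left_pos by blast
  have "\<alpha> * b * d^2 \<le> \<alpha> * c * d^2" using assms by (simp add: mult_right_mono)
  then have "b * (\<alpha> * (d^2 + f^2)) < b * (c * a^2)" using aY unfolding Y_def by (simp add: algebra_simps)
  then have df: "\<alpha> * (d^2 + f^2) < c * a^2" using assms(2) by simp
  have ba: "b * a^2 > 0" using a0 assms(2) by simp
  have bf: "b * f^2 \<ge> 0" "c * d^2 \<ge> 0" using assms c0 by simp_all
  show ?thesis using gX df ba bf unfolding X_def by (simp add: algebra_simps)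
qed

lemma pairs4_eq: "pairs4 = {(1,2),(1,3),(1,4),(2,3),(2,4),(3,4)}"
  unfolding pairs4_def by auto

lemma four_eq: "{1..4::nat} = {1,2,3,4}" by auto

lemma sum_pairs4:
  "(\<Sum>(i, j)\<in>pairs4. F i j) = F 1 2 + F 1 3 + F 1 4 + F 2 3 + F 2 4 + F 3 4"
  unfolding pairs4_eq by (simp add: add.assoc)

lemma interlace:
  fixes e :: "nat \<Rightarrow> real" and h n1 n2 r1 r2 :: real
  assumes "e 1 < e 2" "e 2 < e 3" "e 3 < e 4" "h > 0"
    and "(n1, n2) \<in> momentum_image e h"
    and R: "\<forall>z. polyR h n1 n2 z = 2 * h * (z - r1) * (z - r2)"
    and "r1 \<le> r2"
  shows "r1 \<le> e 3" "e 2 \<le> r2"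
proof -
  obtain L where L: "L \<in> M_h h" "n1 = eta1 e L" "n2 = eta2 e L"
    using assms(5) unfolding momentum_image_def by auto
  define a where "a = L 1 2"
  define B where "B = L 1 3"
  define C where "C = L 1 4"
  define d where "d = L 2 3"
  define f where "f = L 2 4"
  define g where "g = L 3 4"
  have S: "a^2 + B^2 + C^2 + d^2 + f^2 + g^2 = 2 * h"
    using L(1) unfolding M_h_def sum_pairs4 a_def B_def C_def d_def f_def g_def by simp
  have Pl: "a * g - B * f + C * d = 0"
    using L(1) unfolding M_h_def a_def B_def C_def d_def f_def g_def by simp
  have n1: "n1 = a^2 * (e 3 + e 4) + B^2 * (e 2 + e 4) + C^2 * (e 2 + e 3) + d^2 * (e 1 + e 4) + f^2 * (e 1 + e 3) + g^2 * (e 1 + e 2)"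
    using L(2) unfolding eta1_def sum_pairs4 four_eq a_def B_def C_def d_def f_def g_def
    by (simp add: insert_Diff_if)
  have n2: "n2 = a^2 * (e 3 * e 4) + B^2 * (e 2 * e 4) + C^2 * (e 2 * e 3) + d^2 * (e 1 * e 4) + f^2 * (e 1 * e 3) + g^2 * (e 1 * e 2)"
    using L(3) unfolding eta2_def sum_pairs4 four_eq a_def B_def C_def d_def f_def g_def
    by (simp add: insert_Diff_if)
  have Rz: "2 * h * z^2 - n1 * z + n2 = 2 * h * (z - r1) * (z - r2)" for z
    using R unfolding polyR_def by simp
  have n2r: "n2 = 2 * h * r1 * r2" using Rz[of 0] by simp
  have n1r: "n1 = 2 * h * (r1 + r2)" using Rz[of 1] n2r by (simp add: algebra_simps)
  show "e 2 \<le> r2"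
  proof (rule ccontr)
    assume "\<not> e 2 \<le> r2"
    then have lt: "r2 < e 2" by simp
    have "2 * h * (e 2 - r1) * (e 2 - r2) > 0" using lt assms(4,7) by simp
    then have R0: "(e 3 - e 2) * (e 4 - e 2) * a^2 - (e 2 - e 1) * (e 4 - e 2) * d^2 - (e 2 - e 1) * (e 3 - e 2) * f^2 > 0"
    proof -
      have "2 * h * (e 2)^2 - n1 * e 2 + n2 = (e 3 - e 2) * (e 4 - e 2) * a^2 - (e 2 - e 1) * (e 4 - e 2) * d^2 - (e 2 - e 1) * (e 3 - e 2) * f^2"
        unfolding n1 n2 S[symmetric] by (simp add: algebra_simps power2_eq_square)
      then show ?thesis using Rz[of "e 2"] \<open>2 * h * (e 2 - r1) * (e 2 - r2) > 0\<close> by simp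
    qed
    have "- ((e 3 - e 2) + (e 4 - e 2)) * a^2 - (e 4 - e 2) * B^2 - (e 3 - e 2) * C^2 + ((e 2 - e 1) - (e 4 - e 2)) * d^2
       + ((e 2 - e 1) - (e 3 - e 2)) * f^2 + (e 2 - e 1) * g^2 < 0"
      by (rule interlace_core) (use assms(1-3) Pl R0 in \<open>auto simp: algebra_simps\<close>)
    moreover have "4 * h * e 2 - n1 > 0"
    proof -
      have "4 * h * e 2 - n1 = (2 * h) * (2 * e 2 - r1 - r2)" using n1r by (simp add: algebra_simps)
      moreover have "(2 * h) * (2 * e 2 - r1 - r2) > 0" using lt assms(4,7) by (intro mult_pos_pos) auto
      ultimately show ?thesis by simp
    qed
    moreover have "4 * h * e 2 - n1 = - ((e 3 - e 2) + (e 4 - e 2)) * a^2 - (e 4 - e 2) * B^2 - (e 3 - e 2) * C^2 + ((e 2 - e 1) - (e 4 - e 2)) * d^2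
       + ((e 2 - e 1) - (e 3 - e 2)) * f^2 + (e 2 - e 1) * g^2"
    proof -
      have "4 * h * e 2 - n1 = 2 * (2 * h) * e 2 - n1" by simp
      also have "\<dots> = - ((e 3 - e 2) + (e 4 - e 2)) * a^2 - (e 4 - e 2) * B^2 - (e 3 - e 2) * C^2 + ((e 2 - e 1) - (e 4 - e 2)) * d^2
       + ((e 2 - e 1) - (e 3 - e 2)) * f^2 + (e 2 - e 1) * g^2"
        unfolding n1 S[symmetric] by (simp add: algebra_simps power2_eq_square)
      finally show ?thesis .
    qed
    ultimately show False by linarith
  qed
  show "r1 \<le> e 3"
  proof (rule ccontr)
    assume "\<not> r1 \<le> e 3"
    then have lt: "e 3 < r1" by simp
    have "2 * h * (e 3 - r1) * (e 3 - r2) > 0" using lt assms(4,7) by (simp add: mult_pos_pos mult_neg_neg)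
    then have R0: "(e 3 - e 2) * (e 3 - e 1) * g^2 - (e 4 - e 3) * (e 3 - e 1) * d^2 - (e 4 - e 3) * (e 3 - e 2) * B^2 > 0"
    proof -
      have "2 * h * (e 3)^2 - n1 * e 3 + n2 = (e 3 - e 2) * (e 3 - e 1) * g^2 - (e 4 - e 3) * (e 3 - e 1) * d^2 - (e 4 - e 3) * (e 3 - e 2) * B^2"
        unfolding n1 n2 S[symmetric] by (simp add: algebra_simps power2_eq_square)
      then show ?thesis using Rz[of "e 3"] \<open>2 * h * (e 3 - r1) * (e 3 - r2) > 0\<close> by simp
    qed
    have "- ((e 3 - e 2) + (e 3 - e 1)) * g^2 - (e 3 - e 1) * f^2 - (e 3 - e 2) * C^2 + ((e 4 - e 3) - (e 3 - e 1)) * d^2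
       + ((e 4 - e 3) - (e 3 - e 2)) * B^2 + (e 4 - e 3) * a^2 < 0"
      by (rule interlace_core) (use assms(1-3) Pl R0 in \<open>auto simp: algebra_simps\<close>)
    moreover have "4 * h * e 3 - n1 < 0"
    proof -
      have "4 * h * e 3 - n1 = (2 * h) * (2 * e 3 - r1 - r2)" using n1r by (simp add: algebra_simps)
      moreover have "(2 * h) * (2 * e 3 - r1 - r2) < 0" using lt assms(4,7) by (intro mult_pos_neg) auto
      ultimately show ?thesis by simp
    qed
    moreover have "n1 - 4 * h * e 3 = - ((e 3 - e 2) + (e 3 - e 1)) * g^2 - (e 3 - e 1) * f^2 - (e 3 - e 2) * C^2 + ((e 4 - e 3) - (e 3 - e 1)) * d^2
       + ((e 4 - e 3) - (e 3 - e 2)) * B^2 + (e 4 - e 3) * a^2"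
    proof -
      have "n1 - 4 * h * e 3 = n1 - 2 * (2 * h) * e 3" by simp
      also have "\<dots> = - ((e 3 - e 2) + (e 3 - e 1)) * g^2 - (e 3 - e 1) * f^2 - (e 3 - e 2) * C^2 + ((e 4 - e 3) - (e 3 - e 1)) * d^2
       + ((e 4 - e 3) - (e 3 - e 2)) * B^2 + (e 4 - e 3) * a^2"
        unfolding n1 S[symmetric] by (simp add: algebra_simps power2_eq_square)
      finally show ?thesis .
    qed
    ultimately show False by linarith
  qed
qed

lemma Wf_nonneg: "Wf r1 r2 a1 a2 a3 a4 x \<ge> 0"
  unfolding Wf_def by simp

lemma alg_half: "- (2 * h * p) / (4 * a) = (h / 2) * (- (p / (a::real)))"
  by (cases "a = 0") (simp_all add: field_simps)

theorem lemma5: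
  fixes e :: "nat \<Rightarrow> real" and h n1 n2 r1 r2 :: real
  assumes "e 1 < e 2" "e 2 < e 3" "e 3 < e 4"
    and "h > 0"
    and "(n1, n2) \<in> momentum_image e h"
    and "\<forall>z. polyR h n1 n2 z = 2 * h * (z - r1) * (z - r2)"
    and "r1 \<le> r2" "e 1 \<le> r1" "r2 \<le> e 4"
  shows "2 / pi * integral {e 1 .. min r1 (e 2)} (mom_p e h n1 n2)
       + 2 / pi * integral {max r1 (e 2) .. min r2 (e 3)} (mom_p e h n1 n2)
       + 2 / pi * integral {max r2 (e 3) .. e 4} (mom_p e h n1 n2) = sqrt (2 * h)"
proof -
  have il: "r1 \<le> e 3" "e 2 \<le> r2" using interlace[OF assms(1-7)] by auto
  note ord = assms(1-3) assms(8) assms(7) assms(9) il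
  define W where "W = Wf r1 r2 (e 1) (e 2) (e 3) (e 4)"
  define P where "P = {r1, r2, e 1, e 2, e 3, e 4}"
  have finP: "finite P" unfolding P_def by simp
  have mom: "mom_p e h n1 n2 x = sqrt (h / 2) * W x"
    if xP: "x \<notin> P" and xI: "x \<in> {e 1..min r1 (e 2)} \<or> x \<in> {max r1 (e 2)..min r2 (e 3)} \<or> x \<in> {max r2 (e 3)..e 4}" for x
  proof -
    have cv: "- ((x - r1) * (x - r2) / ((x - e 1) * (x - e 2) * (x - e 3) * (x - e 4))) = (W x)^2"
      unfolding W_def by (rule cut_val[OF ord _ xI]) (use xP in \<open>simp add: P_def\<close>)
    have pa: "polyA e x = (x - e 1) * (x - e 2) * (x - e 3) * (x - e 4)"
      unfolding polyA_def four_eq by (simp add: mult_ac)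
    have "- polyR h n1 n2 x / (4 * polyA e x) = (h / 2) * (- ((x - r1) * (x - r2) / ((x - e 1) * (x - e 2) * (x - e 3) * (x - e 4))))"
    proof -
      have pr: "polyR h n1 n2 x = 2 * h * ((x - r1) * (x - r2))" by (metis assms(6) mult.assoc)
      show ?thesis unfolding pr pa by (rule alg_half)
    qed
    also have "\<dots> = (h / 2) * (W x)^2" using cv by simp
    finally have "mom_p e h n1 n2 x = sqrt ((h / 2) * (W x)^2)" unfolding mom_p_def by simp
    also have "\<dots> = sqrt (h / 2) * sqrt ((W x)^2)" by (rule real_sqrt_mult)
    also have "\<dots> = sqrt (h / 2) * W x" using Wf_nonneg unfolding W_def by simp
    finally show ?thesis .
  qed
  note cr = core[OF ord]
  have hI: "(mom_p e h n1 n2 has_integral (sqrt (h / 2) * integral I W)) I"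
    if I: "I = {e 1..min r1 (e 2)} \<or> I = {max r1 (e 2)..min r2 (e 3)} \<or> I = {max r2 (e 3)..e 4}" for I
  proof -
    have "W integrable_on I" using I cr(1-3) unfolding W_def by auto
    then have h0: "((\<lambda>x. sqrt (h / 2) * W x) has_integral (sqrt (h / 2) * integral I W)) I"
      by (intro has_integral_mult_right integrable_integral)
    show ?thesis
      by (rule has_integral_spike_finite[OF finP _ h0]) (use mom I in auto)
  qed
  have i1: "integral {e 1..min r1 (e 2)} (mom_p e h n1 n2) = sqrt (h / 2) * integral {e 1..min r1 (e 2)} W"
    using hI by (simp add: integral_unique)
  have i2: "integral {max r1 (e 2)..min r2 (e 3)} (mom_p e h n1 n2) = sqrt (h / 2) * integral {max r1 (e 2)..min r2 (e 3)} W"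
    using hI by (simp add: integral_unique)
  have i3: "integral {max r2 (e 3)..e 4} (mom_p e h n1 n2) = sqrt (h / 2) * integral {max r2 (e 3)..e 4} W"
    using hI by (simp add: integral_unique)
  have sumW: "integral {e 1..min r1 (e 2)} W + integral {max r1 (e 2)..min r2 (e 3)} W + integral {max r2 (e 3)..e 4} W = pi"
    using cr(4) unfolding W_def .
  have "2 / pi * integral {e 1 .. min r1 (e 2)} (mom_p e h n1 n2)
       + 2 / pi * integral {max r1 (e 2) .. min r2 (e 3)} (mom_p e h n1 n2)
       + 2 / pi * integral {max r2 (e 3) .. e 4} (mom_p e h n1 n2)
     = 2 / pi * sqrt (h / 2) * (integral {e 1..min r1 (e 2)} W + integral {max r1 (e 2)..min r2 (e 3)} W + integral {max r2 (e 3)..e 4} W)"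
    unfolding i1 i2 i3 by (simp add: algebra_simps)
  also have "\<dots> = 2 * sqrt (h / 2)" unfolding sumW by simp
  also have "\<dots> = sqrt (2 * h)"
  proof -
    have s4: "sqrt 4 = (2::real)"
      by (rule real_sqrt_unique) simp_all
    have "sqrt (2 * h) = sqrt (4 * (h / 2))" by simp
    also have "\<dots> = sqrt 4 * sqrt (h / 2)" by (rule real_sqrt_mult)
    finally show ?thesis using s4 by simp
  qed
  finally show ?thesis .
qed


end
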